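(* For integers $n\ge1$ and $0\le k\le n-1$, $$\sum_{r=0}^{n}N_k^{n,r}=2^{k+1}(k+1)\frac{(2n-k-2)!}{n!\,(n-k-1)!}.$$ Equivalently, if two independent walkers start at the origin and each takes $n$ steps, each step being N or E with probability $1/2$ independently, then conditional on finishing at the same point, the probability that their vertex sets share exactly $k$ points other than the origin and the common endpoint is $$p(n,k)=\frac{2^{k+1}(k+1)(2n-k-2)!\,n!}{(n-k-1)!\,(2n)!}.$$
   Context: For $n\ge1$ and $0\le r\le n$, a lattice path from $(0,0)$ to $(r,n-r)$ is a sequence of lattice points $v_0=(0,0),\dots,v_n=(r,n-r)$ with each step $v_i-v_{i-1}\in\{(1,0)\ (\text{E}),(0,1)\ (\text{N})\}$; its vertex set is $\{v_0,\dots,v_n\}$. $N_k^{n,r}$ denotes the number of ordered pairs of lattice paths from $(0,0)$ to $(r,n-r)$ whose vertex sets share exactly $k$ points other than $(0,0)$ and $(r,n-r)$. *)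

theory Defs
  imports Complex_Main
begin

definition lattice_path :: "nat \<Rightarrow> nat \<Rightarrow> (nat \<times> nat) list \<Rightarrow> bool" where
  "lattice_path n r vs \<longleftrightarrow>
     length vs = n + 1 \<and> vs ! 0 = (0, 0) \<and> vs ! n = (r, n - r) \<and>
     (\<forall>i. 1 \<le> i \<and> i \<le> n \<longrightarrow>
        (vs ! i = (fst (vs ! (i - 1)) + 1, snd (vs ! (i - 1))) \<or>
         vs ! i = (fst (vs ! (i - 1)), snd (vs ! (i - 1)) + 1)))"

definition lattice_paths :: "nat \<Rightarrow> nat \<Rightarrow> (nat \<times> nat) list set" where
  "lattice_paths n r = {vs. lattice_path n r vs}"

definition N_count :: "nat \<Rightarrow> nat \<Rightarrow> nat \<Rightarrow> nat" where
  "N_count k n r = card {(p, q). p \<in> lattice_paths n r \<and> q \<in> lattice_paths n r \<and>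
       card ((set p \<inter> set q) - {(0, 0), (r, n - r)}) = k}"

end

theory Submission
  imports Defs
begin

fun Zr :: "int \<Rightarrow> nat \<Rightarrow> nat \<Rightarrow> nat" where
  "Zr d j 0 = (if d = 0 \<and> j = 0 then 1 else 0)"
| "Zr d j (Suc n) =
     2 * (if d = 0 then (if j = 0 then 0 else Zr 0 (j - 1) n) else Zr d j n)
     + (if d + 1 = 0 then (if j = 0 then 0 else Zr 0 (j - 1) n) else Zr (d + 1) j n)
     + (if d - 1 = 0 then (if j = 0 then 0 else Zr 0 (j - 1) n) else Zr (d - 1) j n)"

definition P :: "nat \<Rightarrow> nat \<Rightarrow> nat \<Rightarrow> int" where
  "P a j n = int ((2*n - j) choose (n + a - 1)) - int ((2*n - j) choose (n + a))"

definition Zc :: "nat \<Rightarrow> nat \<Rightarrow> nat \<Rightarrow> int" where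
  "Zc a j n = (if j = 0 then (if a = 0 \<and> n = 0 then 1 else 0)
     else if n < j then 0
     else if a = 0 then 2^j * (int ((2*n - j - 1) choose (n - 1)) - int ((2*n - j - 1) choose n))
     else 2^(j-1) * P a j n)"

lemma pascal2: "(N + 2) choose (m + 2) = (N choose (m+2)) + 2 * (N choose (m+1)) + (N choose m)"
  by (simp add: numeral_2_eq_2 binomial_Suc_Suc)

lemma Zc0_as_P: assumes "1 \<le> j" "j \<le> n" shows "Zc 0 (j - 1) n = 2^(j-1) * P 0 j n"
proof (cases "j = 1")
  case True
  then have "n \<ge> 1" using assms by simp
  have "(2*n - 1) choose (n - 1) = (2*n-1) choose n"
    using binomial_symmetric[of n "2*n-1"] \<open>n \<ge> 1\<close> by simp
  then show ?thesis using True \<open>n \<ge> 1\<close> by (simp add: Zc_def P_def)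
next
  case False
  then have "j - 1 \<noteq> 0" "\<not> n < j - 1" "2*n - (j-1) - 1 = 2*n - j" using assms by auto
  then show ?thesis by (simp add: Zc_def P_def)
qed

lemma Zc_big: assumes "n < j" shows "Zc a j n = 0"
  using assms by (simp add: Zc_def)

lemma P_step: assumes "1 \<le> a" "1 \<le> j" "j \<le> n"
  shows "P a j (Suc n) = 2 * P a j n + P (a+1) j n + P (a-1) j n"
proof -
  define N where "N = 2*n - j"
  define m where "m = n + a - 2"
  have e1: "2 * Suc n - j = N + 2" using assms by (simp add: N_def)
  have e2: "Suc n + a - 1 = m + 2" "Suc n + a = (m+1) + 2" using assms by (simp_all add: m_def)
  have f: "2*n - j = N" "n + a - 1 = m + 1" "n + a = m + 2" "n + (a+1) - 1 = m+2" "n + (a+1) = m+3"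
     "n + (a - 1) - 1 = m" "n + (a-1) = m + 1"
    using assms by (simp_all add: m_def N_def)
  have "P a j (Suc n) = int ((N+2) choose (m + 2)) - int ((N+2) choose ((m + 1) + 2))"
    unfolding P_def e1 e2 by simp
  also have "\<dots> = int (N choose (m+2)) + 2 * int (N choose (m+1)) + int (N choose m)
      - (int (N choose (m+3)) + 2 * int (N choose (m+2)) + int (N choose (m+1)))"
    unfolding pascal2 by (simp add: numeral_3_eq_3)
  also have "\<dots> = 2 * P a j n + P (a+1) j n + P (a-1) j n"
    unfolding P_def f by (simp add: algebra_simps)
  finally show ?thesis .
qed

lemma Zc_ge2: assumes "a \<ge> 2"
  shows "Zc a j (Suc n) = 2 * Zc a j n + Zc (a+1) j n + Zc (a-1) j n"
proof -
  consider "j = 0" | "Suc n < j" | "j = Suc n" | "1 \<le> j \<and> j \<le> n" by linarith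
  then show ?thesis
  proof cases
    case 1 then show ?thesis using assms by (simp add: Zc_def)
  next
    case 2 then show ?thesis by (simp add: Zc_def)
  next
    case 3
    have "2 * Suc n - j = n + 1" "Suc n + a - 1 > n + 1" "Suc n + a > n + 1" using 3 assms by auto
    then have "P a j (Suc n) = 0" unfolding P_def by (simp only: binomial_eq_0)
    then show ?thesis using 3 assms by (simp add: Zc_def)
  next
    case 4
    then show ?thesis using assms P_step[of a j n] by (simp add: Zc_def algebra_simps)
  qed
qed

lemma Zc_1:
  shows "Zc 1 j (Suc n) = 2 * Zc 1 j n + Zc 2 j n + (if j = 0 then 0 else Zc 0 (j-1) n)"
proof -
  consider "j = 0" | "Suc n < j" | "j = Suc n" | "1 \<le> j \<and> j \<le> n" by linarith
  then show ?thesis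
  proof cases
    case 1 then show ?thesis by (simp add: Zc_def)
  next
    case 2 then have "n < j - 1" by linarith
    with 2 show ?thesis by (simp add: Zc_big)
  next
    case 3
    have "2 * Suc n - j = n + 1" using 3 by auto
    then have "P 1 j (Suc n) = 1" unfolding P_def by simp
    moreover have "Zc 0 n n = 2^n"
    proof (cases n)
      case 0 then show ?thesis by (simp add: Zc_def)
    next
      case (Suc m)
      have "2 * n - n - 1 = n - 1" by simp
      then show ?thesis using Suc by (simp add: Zc_def)
    qed
    ultimately show ?thesis using 3 by (simp add: Zc_def)
  next
    case 4
    have h0: "Zc 0 (j - 1) n = 2^(j-1) * P 0 j n" using Zc0_as_P 4 by auto
    have h1: "Zc 1 j (Suc n) = 2^(j-1) * P 1 j (Suc n)" "Zc 1 j n = 2^(j-1) * P 1 j n"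
      "Zc 2 j n = 2^(j-1) * P 2 j n" using 4 by (simp_all add: Zc_def)
    have h2: "P 1 j (Suc n) = 2 * P 1 j n + P 2 j n + P 0 j n"
      using P_step[of 1 j n] 4 by (simp add: numeral_2_eq_2)
    show ?thesis using 4 unfolding h0 h1 h2 by (simp add: algebra_simps)
  qed
qed

lemma Zc_0:
  shows "Zc 0 j (Suc n) = 2 * (if j = 0 then 0 else Zc 0 (j-1) n) + 2 * Zc 1 j n"
proof -
  consider "j = 0" | "Suc n < j" | "j = Suc n" | "1 \<le> j \<and> j \<le> n" by linarith
  then show ?thesis
  proof cases
    case 1 then show ?thesis by (simp add: Zc_def)
  next
    case 2 then have "n < j - 1" by linarith
    with 2 show ?thesis by (simp add: Zc_big)
  next
    case 3
    have "Zc 0 n n = 2^n"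
    proof (cases n)
      case 0 then show ?thesis by (simp add: Zc_def)
    next
      case (Suc m)
      have "2 * n - n - 1 = n - 1" by simp
      then show ?thesis using Suc by (simp add: Zc_def)
    qed
    moreover have "2 * Suc n - j - 1 = n" using 3 by simp
    ultimately show ?thesis using 3 by (simp add: Zc_def)
  next
    case 4
    define N where "N = 2*n - j"
    have h0: "Zc 0 (j - 1) n = 2^(j-1) * P 0 j n" using Zc0_as_P 4 by auto
    have h1: "Zc 1 j n = 2^(j-1) * P 1 j n" using 4 by (simp add: Zc_def)
    have e: "2 * Suc n - j - 1 = Suc N" using 4 by (auto simp: N_def)
    have "Zc 0 j (Suc n) = 2^j * (int (Suc N choose n) - int (Suc N choose Suc n))"
      using 4 e by (simp add: Zc_def)
    also have "\<dots> = 2^j * (int (N choose (n-1)) - int (N choose Suc n))"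
    proof -
      obtain m where m: "n = Suc m" using 4 by (cases n) auto
      show ?thesis unfolding m by (simp add: binomial_Suc_Suc)
    qed
    also have "\<dots> = 2 * (2^(j-1) * P 0 j n) + 2 * (2^(j-1) * P 1 j n)"
    proof -
      have "(2::int)^j = 2 * 2^(j-1)" using 4 by (cases j) auto
      then show ?thesis unfolding P_def N_def by (simp add: algebra_simps)
    qed
    finally show ?thesis using h0 h1 4 by simp
  qed
qed

lemma Zr_Zc: "int (Zr d j n) = Zc (nat \<bar>d\<bar>) j n"
proof (induction n arbitrary: d j)
  case 0
  then show ?case by (auto simp: Zc_def)
next
  case (Suc n)
  define S where "S e = (if e = 0 then (if j = 0 then 0 else Zc 0 (j-1) n) else Zc (nat \<bar>e\<bar>) j n)" for e :: int
  have SS: "int (if e = 0 then (if j = 0 then 0 else Zr 0 (j - 1) n) else Zr e j n) = S e" for e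
    using Suc.IH unfolding S_def by auto
  have L: "int (Zr d j (Suc n)) = 2 * S d + S (d+1) + S (d - 1)"
    by (simp only: Zr.simps of_nat_add of_nat_mult SS of_nat_numeral)
  consider "d = 0" | "d = 1" | "d = -1" | "\<bar>d\<bar> \<ge> 2" by linarith
  then show ?case
  proof cases
    case 1 then show ?thesis using L Zc_0[of j n] by (simp add: S_def)
  next
    case 2 then show ?thesis using L Zc_1[of j n] by (simp add: S_def)
  next
    case 3 then show ?thesis using L Zc_1[of j n] by (simp add: S_def)
  next
    case 4
    have a: "S d = Zc (nat \<bar>d\<bar>) j n" using 4 by (auto simp: S_def)
    have g2: "2 \<le> nat \<bar>d\<bar>" using 4 by linarith
    note G = Zc_ge2[OF g2, of j n]
    show ?thesis
    proof (cases "d > 0")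
      case True
      then have "S (d+1) = Zc (nat \<bar>d\<bar> + 1) j n" "S (d-1) = Zc (nat \<bar>d\<bar> - 1) j n"
        using 4 by (auto simp: S_def nat_add_distrib nat_diff_distrib)
      then show ?thesis using L a G by simp
    next
      case False
      have q: "nat \<bar>d - 1\<bar> = nat \<bar>d\<bar> + 1" "nat \<bar>d + 1\<bar> = nat \<bar>d\<bar> - 1"
        using 4 False by arith+
      have "S (d-1) = Zc (nat \<bar>d\<bar> + 1) j n" "S (d+1) = Zc (nat \<bar>d\<bar> - 1) j n"
        using 4 unfolding S_def q[symmetric] by auto
      then show ?thesis using L a G by simp
    qed
  qed
qed

definition cnt :: "bool list \<Rightarrow> nat" where "cnt u = length (filter id u)"

lemma cnt_Nil[simp]: "cnt [] = 0" and cnt_Cons[simp]: "cnt (a # u) = (if a then 1 else 0) + cnt u"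
  by (auto simp: cnt_def)

definition Ls :: "nat \<Rightarrow> bool list set" where "Ls n = {xs. length xs = n}"

lemma finite_Ls[simp]: "finite (Ls n)"
proof -
  have "Ls n = {xs. set xs \<subseteq> UNIV \<and> length xs = n}" by (simp add: Ls_def)
  then show ?thesis using finite_lists_length_eq[of "UNIV :: bool set" n] by simp
qed

lemma Ls_0: "Ls 0 = {[]}" by (auto simp: Ls_def)

lemma sum_Ls_Suc: "sum f (Ls (Suc n)) = sum (\<lambda>u. f (True # u)) (Ls n) + sum (\<lambda>u. f (False # u)) (Ls n)"
proof -
  have e: "Ls (Suc n) = Cons True ` Ls n \<union> Cons False ` Ls n"
  proof
    show "Ls (Suc n) \<subseteq> Cons True ` Ls n \<union> Cons False ` Ls n"
    proof
      fix x assume "x \<in> Ls (Suc n)"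
      then obtain a u where "x = a # u" "length u = n" by (auto simp: Ls_def length_Suc_conv)
      then show "x \<in> Cons True ` Ls n \<union> Cons False ` Ls n" by (cases a) (auto simp: Ls_def)
    qed
  qed (auto simp: Ls_def)
  have "sum f (Ls (Suc n)) = sum f (Cons True ` Ls n) + sum f (Cons False ` Ls n)"
    unfolding e by (rule sum.union_disjoint) auto
  also have "\<dots> = sum (\<lambda>u. f (True # u)) (Ls n) + sum (\<lambda>u. f (False # u)) (Ls n)"
    by (simp add: sum.reindex)
  finally show ?thesis .
qed

fun zc :: "int \<Rightarrow> bool list \<Rightarrow> bool list \<Rightarrow> nat" where
  "zc d (a # u) (b # v) = (let e = d + (if a then 1 else 0) - (if b then 1 else 0) in
      (if e = 0 then 1 else 0) + zc e u v)"
| "zc d _ _ = 0"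

definition fin :: "int \<Rightarrow> bool list \<Rightarrow> bool list \<Rightarrow> int" where
  "fin d u v = d + int (cnt u) - int (cnt v)"

definition Cs :: "int \<Rightarrow> nat \<Rightarrow> nat \<Rightarrow> nat" where
  "Cs d j n = (\<Sum>u\<in>Ls n. \<Sum>v\<in>Ls n. if zc d u v = j \<and> fin d u v = 0 then 1 else 0)"

definition ind :: "int \<Rightarrow> nat \<Rightarrow> bool list \<Rightarrow> bool list \<Rightarrow> nat" where
  "ind d j u v = (if zc d u v = j \<and> fin d u v = 0 then 1 else 0)"

lemma ind_Cons: "ind d j (a # u) (b # v) =
  (let e = d + (if a then 1 else 0) - (if b then 1 else 0) in
   if e = 0 then (if j = 0 then 0 else ind 0 (j - 1) u v) else ind e j u v)"
  by (auto simp: ind_def fin_def Let_def)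

lemma Cs_Zr: "Cs d j n = Zr d j n"
proof (induction n arbitrary: d j)
  case 0
  then show ?case by (simp add: Cs_def Ls_0 fin_def)
next
  case (Suc n)
  define X where "X e = (if e = 0 then (if j = 0 then 0 else Zr 0 (j - 1) n) else Zr e j n)" for e :: int
  have CX: "(\<Sum>u\<in>Ls n. \<Sum>v\<in>Ls n. (if e = 0 then (if j = 0 then 0 else ind 0 (j - 1) u v) else ind e j u v)) = X e" for e
    using Suc.IH unfolding X_def Cs_def ind_def[symmetric] by (cases "e = 0") (auto)
  have "Cs d j (Suc n) = (\<Sum>u\<in>Ls (Suc n). \<Sum>v\<in>Ls (Suc n). ind d j u v)"
    by (simp add: Cs_def ind_def)
  also have "\<dots> = X d + X (d + 1) + X (d - 1) + X d"
    by (simp add: sum_Ls_Suc ind_Cons sum.distrib CX[symmetric] Let_def)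
  also have "\<dots> = Zr d j (Suc n)" by (simp add: X_def)
  finally show ?case .
qed

lemma card_shift: "card {i \<in> {1..Suc n}. Q i} = card {i \<in> {0..n}. Q (Suc i)}"
proof -
  have "{i \<in> {1..Suc n}. Q i} = Suc ` {i \<in> {0..n}. Q (Suc i)}"
  proof (rule set_eqI, rule iffI)
    fix x assume "x \<in> {i \<in> {1..Suc n}. Q i}"
    then have "x = Suc (x - 1)" "x - 1 \<in> {i \<in> {0..n}. Q (Suc i)}" by auto
    then show "x \<in> Suc ` {i \<in> {0..n}. Q (Suc i)}" by (metis image_eqI)
  qed auto
  then show ?thesis by (simp add: card_image)
qed

lemma card_split0: "card {i \<in> {0..n::nat}. Q i} = (if Q 0 then 1 else 0) + card {i \<in> {1..n}. Q i}"
proof -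
  have e: "{i \<in> {0..n}. Q i} = (if Q 0 then {0} else {}) \<union> {i \<in> {1..n}. Q i}" by (auto simp: Suc_le_eq) (metis not_gr0)
  show ?thesis unfolding e by (auto simp: card_insert_if)
qed

lemma zc_card: "length u = length v \<Longrightarrow>
  zc d u v = card {i \<in> {1..length u}. d + int (cnt (take i u)) - int (cnt (take i v)) = 0}"
proof (induction u v arbitrary: d rule: list_induct2)
  case Nil
  then show ?case by simp
next
  case (Cons a u b v)
  define e where "e = d + (if a then 1 else 0) - (if b then 1 else 0)"
  have "card {i \<in> {1..length (a # u)}. d + int (cnt (take i (a # u))) - int (cnt (take i (b # v))) = 0}
      = card {i \<in> {0..length u}. e + int (cnt (take i u)) - int (cnt (take i v)) = 0}"
    unfolding length_Cons card_shift by (simp add: e_def algebra_simps)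
  also have "\<dots> = (if e = 0 then 1 else 0) + zc e u v"
    unfolding card_split0 Cons.IH by simp
  finally show ?case by (simp add: e_def Let_def)
qed

definition pt :: "bool list \<Rightarrow> nat \<Rightarrow> nat \<times> nat" where
  "pt u i = (cnt (take i u), i - cnt (take i u))"

definition verts :: "bool list \<Rightarrow> (nat \<times> nat) list" where
  "verts u = map (pt u) [0..<Suc (length u)]"

lemma cnt_le_length: "cnt u \<le> length u"
  by (simp add: cnt_def)

lemma cnt_take_le: "cnt (take i u) \<le> i"
  using cnt_le_length[of "take i u"] by simp

lemma cnt_take_Suc: "i < length u \<Longrightarrow> cnt (take (Suc i) u) = cnt (take i u) + (if u ! i then 1 else 0)"
  by (simp add: take_Suc_conv_app_nth cnt_def)

lemma pt_sum: "fst (pt u i) + snd (pt u i) = i"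
  using cnt_take_le[of i u] by (simp add: pt_def)

lemma verts_nth: "i \<le> length u \<Longrightarrow> verts u ! i = pt u i"
  by (simp add: verts_def nth_append del: upt_Suc)

lemma set_verts: "set (verts u) = pt u ` {0..length u}"
  by (simp add: verts_def atLeastLessThanSuc_atLeastAtMost del: upt_Suc)

lemma verts_path: "length u = n \<Longrightarrow> lattice_path n (cnt u) (verts u)"
proof -
  assume n: "length u = n"
  have step: "verts u ! i = (fst (verts u ! (i - 1)) + 1, snd (verts u ! (i - 1))) \<or>
        verts u ! i = (fst (verts u ! (i - 1)), snd (verts u ! (i - 1)) + 1)" if "1 \<le> i" "i \<le> n" for i
  proof -
    define m where "m = i - 1"
    have m: "i = Suc m" using that by (simp add: m_def)
    have ml: "m < length u" using m that n by simp
    have c: "cnt (take m u) \<le> m" by (rule cnt_take_le)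
    have v1: "verts u ! i = pt u (Suc m)" "verts u ! (i - 1) = pt u m"
      using ml m by (simp_all add: verts_nth)
    show ?thesis unfolding v1 pt_def cnt_take_Suc[OF ml] using c
      by (cases "u ! m") (simp_all add: Suc_diff_le)
  qed
  have l: "length (verts u) = n + 1" using n by (simp add: verts_def del: upt_Suc)
  have z: "verts u ! 0 = (0, 0)" by (simp add: verts_nth pt_def)
  have e: "verts u ! n = (cnt u, n - cnt u)" using n by (simp add: verts_nth pt_def)
  show ?thesis unfolding lattice_path_def using l z e step by blast
qed

lemma path_verts:
  assumes "lattice_path n r vs"
  shows "\<exists>u. length u = n \<and> cnt u = r \<and> vs = verts u"
proof -
  from assms have len: "length vs = n + 1" and v0: "vs ! 0 = (0, 0)" and vn: "vs ! n = (r, n - r)"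
    and st: "\<And>i. 1 \<le> i \<Longrightarrow> i \<le> n \<Longrightarrow>
        vs ! i = (fst (vs ! (i - 1)) + 1, snd (vs ! (i - 1))) \<or>
        vs ! i = (fst (vs ! (i - 1)), snd (vs ! (i - 1)) + 1)"
    unfolding lattice_path_def by blast+
  define u where "u = map (\<lambda>i. fst (vs ! Suc i) \<noteq> fst (vs ! i)) [0..<n]"
  have lu: "length u = n" by (simp add: u_def)
  have main: "i \<le> n \<Longrightarrow> vs ! i = pt u i" for i
  proof (induction i)
    case 0
    then show ?case using v0 by (simp add: pt_def)
  next
    case (Suc m)
    have ml: "m < length u" using Suc.prems lu by simp
    have IH: "vs ! m = pt u m" using Suc by simp
    have um: "u ! m = (fst (vs ! Suc m) \<noteq> fst (vs ! m))" using ml lu by (simp add: u_def)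
    have c: "cnt (take m u) \<le> m" by (rule cnt_take_le)
    have s: "vs ! Suc m = (fst (vs ! m) + 1, snd (vs ! m)) \<or> vs ! Suc m = (fst (vs ! m), snd (vs ! m) + 1)"
      using st[of "Suc m"] Suc.prems by simp
    then show ?case
    proof
      assume h: "vs ! Suc m = (fst (vs ! m) + 1, snd (vs ! m))"
      then have "u ! m" using um by simp
      then show ?thesis using h IH c unfolding pt_def cnt_take_Suc[OF ml] by (simp add: Suc_diff_le)
    next
      assume h: "vs ! Suc m = (fst (vs ! m), snd (vs ! m) + 1)"
      then have "\<not> u ! m" using um by simp
      then show ?thesis using h IH c unfolding pt_def cnt_take_Suc[OF ml] by (simp add: Suc_diff_le)
    qed
  qed
  have "vs ! n = pt u n" using main by simp
  then have cr: "cnt u = r" using vn lu by (simp add: pt_def)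
  have "vs = verts u"
  proof (rule nth_equalityI)
    show "length vs = length (verts u)" using len lu by (simp add: verts_def del: upt_Suc)
    fix i assume "i < length vs"
    then have "i \<le> n" using len by simp
    then show "vs ! i = verts u ! i" using main lu by (simp add: verts_nth)
  qed
  then show ?thesis using lu cr by blast
qed

lemma verts_inj:
  assumes "length u = length v" "verts u = verts v"
  shows "u = v"
proof (rule nth_equalityI)
  show "length u = length v" by fact
  fix i assume il: "i < length u"
  have "pt u i = pt v i" "pt u (Suc i) = pt v (Suc i)"
    using assms il verts_nth[of i u] verts_nth[of i v] verts_nth[of "Suc i" u] verts_nth[of "Suc i" v]
    by auto
  then have "cnt (take i u) = cnt (take i v)" "cnt (take (Suc i) u) = cnt (take (Suc i) v)"
    by (auto simp: pt_def)
  then show "u ! i = v ! i" using il assms(1) cnt_take_Suc[of i u] cnt_take_Suc[of i v]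
    by (auto split: if_splits)
qed

lemma paths_eq: "lattice_paths n r = verts ` {u. length u = n \<and> cnt u = r}"
  unfolding lattice_paths_def using path_verts verts_path by blast

lemma pt_inj: "inj_on (pt u) A"
  by (rule inj_onI) (metis pt_sum)

lemma shared_set:
  assumes "length u = n" "length v = n" "cnt u = r" "cnt v = r" "1 \<le> n"
  shows "set (verts u) \<inter> set (verts v) - {(0,0),(r,n-r)} =
         pt u ` {i \<in> {1..<n}. cnt (take i u) = cnt (take i v)}"
proof
  show "set (verts u) \<inter> set (verts v) - {(0,0),(r,n-r)} \<subseteq> pt u ` {i \<in> {1..<n}. cnt (take i u) = cnt (take i v)}"
  proof
    fix x assume x: "x \<in> set (verts u) \<inter> set (verts v) - {(0,0),(r,n-r)}"
    then obtain i i' where i: "i \<le> n" "x = pt u i" and i': "i' \<le> n" "x = pt v i'"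
      using assms unfolding set_verts by auto
    have "i = i'" using i i' pt_sum[of u i] pt_sum[of v i'] by simp
    then have eq: "cnt (take i u) = cnt (take i v)" using i i' by (simp add: pt_def)
    have "pt u 0 = (0,0)" by (simp add: pt_def)
    then have "i \<noteq> 0" using x i by (metis Diff_iff insertCI)
    moreover have "i \<noteq> n" using x i assms by (auto simp: pt_def)
    ultimately show "x \<in> pt u ` {i \<in> {1..<n}. cnt (take i u) = cnt (take i v)}"
      using i eq by auto
  qed
next
  show "pt u ` {i \<in> {1..<n}. cnt (take i u) = cnt (take i v)} \<subseteq> set (verts u) \<inter> set (verts v) - {(0,0),(r,n-r)}"
  proof
    fix x assume "x \<in> pt u ` {i \<in> {1..<n}. cnt (take i u) = cnt (take i v)}"
    then obtain i where i: "1 \<le> i" "i < n" "cnt (take i u) = cnt (take i v)" "x = pt u i" by auto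
    have "x = pt v i" using i by (simp add: pt_def)
    then have "x \<in> set (verts u) \<inter> set (verts v)" using i assms unfolding set_verts
      by (metis IntI atLeastAtMost_iff image_eqI less_imp_le_nat zero_le)
    moreover have "fst x + snd x = i" using i pt_sum by simp
    moreover have "r \<le> n" using assms cnt_le_length[of u] by simp
    ultimately show "x \<in> set (verts u) \<inter> set (verts v) - {(0,0),(r,n-r)}" using i by auto
  qed
qed

lemma shared_card:
  assumes "length u = n" "length v = n" "cnt u = r" "cnt v = r" "1 \<le> n"
  shows "card (set (verts u) \<inter> set (verts v) - {(0,0),(r,n-r)}) =
         card {i \<in> {1..<n}. cnt (take i u) = cnt (take i v)}"
  unfolding shared_set[OF assms] by (rule card_image[OF pt_inj])

lemma zc_final:
  assumes "length u = n" "length v = n" "cnt u = cnt v" "1 \<le> n"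
  shows "zc 0 u v = card {i \<in> {1..<n}. cnt (take i u) = cnt (take i v)} + 1"
proof -
  have "zc 0 u v = card {i \<in> {1..n}. int (cnt (take i u)) - int (cnt (take i v)) = 0}"
    using zc_card[of u v 0] assms by simp
  also have "{i \<in> {1..n}. int (cnt (take i u)) - int (cnt (take i v)) = 0} =
     insert n {i \<in> {1..<n}. cnt (take i u) = cnt (take i v)}"
    using assms by auto
  also have "card \<dots> = card {i \<in> {1..<n}. cnt (take i u) = cnt (take i v)} + 1"
    by (simp add: card_insert_if)
  finally show ?thesis .
qed

definition Zn :: "nat \<Rightarrow> bool list \<Rightarrow> bool list \<Rightarrow> nat" where
  "Zn n u v = card {i \<in> {1..<n}. cnt (take i u) = cnt (take i v)}"

definition Aset :: "nat \<Rightarrow> nat \<Rightarrow> nat \<Rightarrow> (bool list \<times> bool list) set" where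
  "Aset k n r = {(u, v). length u = n \<and> length v = n \<and> cnt u = r \<and> cnt v = r \<and> Zn n u v = k}"

lemma N_count_Aset:
  assumes "1 \<le> n"
  shows "N_count k n r = card (Aset k n r)"
proof -
  define A' where "A' = {(u, v). length u = n \<and> cnt u = r \<and> length v = n \<and> cnt v = r \<and>
      card (set (verts u) \<inter> set (verts v) - {(0, 0), (r, n - r)}) = k}"
  have "{(p, q). p \<in> lattice_paths n r \<and> q \<in> lattice_paths n r \<and>
       card ((set p \<inter> set q) - {(0, 0), (r, n - r)}) = k} = map_prod verts verts ` A'"
  proof (rule set_eqI, rule iffI)
    fix x assume "x \<in> {(p, q). p \<in> lattice_paths n r \<and> q \<in> lattice_paths n r \<and>
       card ((set p \<inter> set q) - {(0, 0), (r, n - r)}) = k}"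
    then obtain p q where x: "x = (p, q)" and p: "p \<in> lattice_paths n r" and q: "q \<in> lattice_paths n r"
       and c: "card ((set p \<inter> set q) - {(0, 0), (r, n - r)}) = k" by blast
    obtain u where u: "length u = n" "cnt u = r" "p = verts u" using p unfolding paths_eq by blast
    obtain v where v: "length v = n" "cnt v = r" "q = verts v" using q unfolding paths_eq by blast
    have "(u, v) \<in> A'" using u v c unfolding A'_def by simp
    moreover have "x = map_prod verts verts (u, v)" using x u v by simp
    ultimately show "x \<in> map_prod verts verts ` A'" by blast
  next
    fix x assume "x \<in> map_prod verts verts ` A'"
    then obtain u v where x: "x = (verts u, verts v)" and uv: "(u, v) \<in> A'" by auto
    have "verts u \<in> lattice_paths n r" "verts v \<in> lattice_paths n r"
      using uv unfolding A'_def paths_eq by auto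
    then show "x \<in> {(p, q). p \<in> lattice_paths n r \<and> q \<in> lattice_paths n r \<and>
       card ((set p \<inter> set q) - {(0, 0), (r, n - r)}) = k}" using uv x unfolding A'_def by auto
  qed
  moreover have "inj_on (map_prod verts verts) A'"
  proof (rule inj_onI)
    fix x y assume xy: "x \<in> A'" "y \<in> A'" "map_prod verts verts x = map_prod verts verts y"
    obtain u v where x: "x = (u, v)" by (cases x)
    obtain u' v' where y: "y = (u', v')" by (cases y)
    have "length u = length u'" "length v = length v'" "verts u = verts u'" "verts v = verts v'"
      using xy unfolding x y A'_def by auto
    then show "x = y" unfolding x y using verts_inj by blast
  qed
  moreover have "A' = Aset k n r"
  proof (rule set_eqI)
    fix x :: "bool list \<times> bool list"
    obtain u v where x: "x = (u, v)" by (cases x)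
    show "x \<in> A' \<longleftrightarrow> x \<in> Aset k n r"
      unfolding x A'_def Aset_def Zn_def using shared_card[of u n v r] assms by auto
  qed
  ultimately show ?thesis unfolding N_count_def by (simp add: card_image)
qed

lemma Aset_sub: "Aset k n r \<subseteq> Ls n \<times> Ls n"
  by (auto simp: Aset_def Ls_def)

lemma finite_Aset: "finite (Aset k n r)"
  by (rule finite_subset[OF Aset_sub]) simp

lemma sum_Aset:
  "(\<Sum>r = 0..n. card (Aset k n r)) =
   card {(u, v). length u = n \<and> length v = n \<and> cnt u = cnt v \<and> Zn n u v = k}"
proof -
  have "(\<Sum>r = 0..n. card (Aset k n r)) = card (\<Union>r\<in>{0..n}. Aset k n r)"
    by (rule card_UN_disjoint[symmetric]) (simp_all add: finite_Aset, auto simp: Aset_def)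
  also have "(\<Union>r\<in>{0..n}. Aset k n r) =
      {(u, v). length u = n \<and> length v = n \<and> cnt u = cnt v \<and> Zn n u v = k}"
    using cnt_le_length by (fastforce simp: Aset_def)
  finally show ?thesis .
qed

lemma card_filter_sum: "finite A \<Longrightarrow> card {v \<in> A. Q v} = (\<Sum>v\<in>A. if Q v then 1 else 0)"
  by (simp add: sum.If_cases Int_def conj_commute)

lemma Cs_card:
  assumes "1 \<le> n"
  shows "Cs 0 (k + 1) n = card {(u, v). length u = n \<and> length v = n \<and> cnt u = cnt v \<and> Zn n u v = k}"
proof -
  have "Cs 0 (k + 1) n = (\<Sum>u\<in>Ls n. card {v \<in> Ls n. zc 0 u v = k + 1 \<and> fin 0 u v = 0})"
    unfolding Cs_def by (simp add: card_filter_sum)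
  also have "\<dots> = card (SIGMA u:Ls n. {v \<in> Ls n. zc 0 u v = k + 1 \<and> fin 0 u v = 0})"
    by simp
  also have "(SIGMA u:Ls n. {v \<in> Ls n. zc 0 u v = k + 1 \<and> fin 0 u v = 0}) =
      {(u, v). length u = n \<and> length v = n \<and> cnt u = cnt v \<and> Zn n u v = k}"
    using zc_final assms by (auto simp: Ls_def fin_def Zn_def)
  finally show ?thesis .
qed

lemma c1: "real ((a + b) choose a) * (fact a * fact b) = fact (a + b)"
  using binomial_fact_lemma[of a "a + b"] by (metis add_diff_cancel_left' le_add1 of_nat_fact of_nat_mult mult.commute)

lemma c2: "real ((a + b) choose Suc a) * (fact (Suc a) * fact b) = fact (a + b) * b"
proof (cases b)
  case 0
  then show ?thesis by simp
next
  case (Suc c)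
  have "real ((Suc a + c) choose Suc a) * (fact (Suc a) * fact c) = fact (Suc a + c)"
    by (rule c1)
  then have "real ((a + b) choose Suc a) * (fact (Suc a) * fact c) = fact (a + b)"
    using Suc by simp
  then have "real ((a + b) choose Suc a) * (fact (Suc a) * fact c) * real b = fact (a + b) * b"
    by simp
  moreover have "(fact b :: real) = fact c * real b" using Suc by (simp add: algebra_simps)
  ultimately show ?thesis by (simp add: algebra_simps)
qed

lemma closed:
  assumes "1 \<le> n" "k \<le> n - 1"
  shows "real_of_int (Zc 0 (k + 1) n) =
     2 ^ (k + 1) * real (k + 1) * fact (2 * n - k - 2) / (fact n * fact (n - k - 1))"
proof -
  define a where "a = n - 1"
  define b where "b = n - k - 1"
  have n: "n = Suc a" using assms by (simp add: a_def)
  have M: "2 * n - k - 2 = a + b" "2 * n - (k + 1) - 1 = a + b" using assms by (simp_all add: a_def b_def)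
  have kb: "real (k + 1) = real (Suc a) - real b" using assms by (simp add: a_def b_def of_nat_diff)
  have Z: "Zc 0 (k + 1) n = 2^(k+1) * (int ((a + b) choose a) - int ((a + b) choose Suc a))"
  proof -
    have "\<not> n < k + 1" using assms by simp
    then show ?thesis using M(2) by (simp add: Zc_def n)
  qed
  have d: "(real ((a + b) choose a) - real ((a + b) choose Suc a)) * (fact (Suc a) * fact b)
      = fact (a + b) * (real (Suc a) - real b)"
  proof -
    have "real ((a + b) choose a) * (fact (Suc a) * fact b) = fact (a + b) * real (Suc a)"
      using c1[of a b] by (simp add: algebra_simps)
    then show ?thesis using c2[of a b] by (simp add: algebra_simps)
  qed
  have pos: "(fact (Suc a) * fact b :: real) \<noteq> 0" by simp
  have "real ((a + b) choose a) - real ((a + b) choose Suc a)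
      = fact (a + b) * (real (Suc a) - real b) / (fact (Suc a) * fact b)"
    using d pos by (simp add: eq_divide_eq)
  then have L: "real_of_int (Zc 0 (k + 1) n) = 2^(k+1) * (fact (a + b) * (real (Suc a) - real b) / (fact (Suc a) * fact b))"
    unfolding Z by simp
  have f1: "(fact (2*n-k-2)::real) = fact (a+b)" by (simp only: M(1))
  have f2: "(fact n::real) = fact (Suc a)" by (simp only: n)
  have f3: "(fact (n-k-1)::real) = fact b" by (simp add: b_def)
  show ?thesis unfolding L f1 f2 f3 kb by simp
qed

theorem mainTheorem7:
  fixes n k :: nat
  assumes "n \<ge> 1" and "k \<le> n - 1"
  shows "real (\<Sum>r = 0..n. N_count k n r) =
         2 ^ (k + 1) * real (k + 1) * fact (2 * n - k - 2) / (fact n * fact (n - k - 1))"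
proof -
  have "(\<Sum>r = 0..n. N_count k n r) = (\<Sum>r = 0..n. card (Aset k n r))"
    using N_count_Aset assms(1) by simp
  also have "\<dots> = Cs 0 (k + 1) n" using sum_Aset Cs_card assms(1) by simp
  also have "\<dots> = Zr 0 (k + 1) n" by (rule Cs_Zr)
  finally have "real (\<Sum>r = 0..n. N_count k n r) = real_of_int (int (Zr 0 (k + 1) n))" by simp
  also have "\<dots> = real_of_int (Zc 0 (k + 1) n)" using Zr_Zc[of 0 "k+1" n] by simp
  finally show ?thesis using closed assms by simp
qed

end
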